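(* Fix $p\in(0,1)$, $\lambda\in[0,1]$, an integer $B>1$, $\omega>0$, $C_r\ge 0$, and let $V$ be the value function (as described in the context). Then: (i) for every $q\in\{0,1,\dots,B\}$ and all integers $1\le\Delta_1\le\Delta_2$, $V(\Delta_2,q)-V(\Delta_1,q)\ge \Delta_2-\Delta_1$; (ii) for every $q\in\{0,1,\dots,B-1\}$ and every $\Delta\in\mathbb Z^+$, $V(\Delta+1,q+1)-V(\Delta,q+1)\ge p\,[V(\Delta+1,q)-V(\Delta,q)]$.
   Context: System model. Time is slotted. State space $\mathcal S=\mathbb Z^+\times\{0,1,\dots,B\}$; a state $\mathbf x=(\Delta,q)$ consists of the Age of Information $\Delta\in\mathbb Z^+=\{1,2,\dots\}$ and the battery level $q$. Action set $\mathcal A=\{0,1\}$ ($a=1$: generate and transmit an update; $a=0$: idle). Let $u(x)=1$ if $x>0$ and $u(x)=0$ otherwise. Transitions: given state $(\Delta,q)$ and action $a$, draw independently $b\sim\mathrm{Bernoulli}(\lambda)$ (harvested energy arrival) and, if $a=1$, a success indicator $s\sim\mathrm{Bernoulli}(1-p)$ (the update is erased with probability $p$); if $a=0$ set $s=0$. The next state is $(\Delta',q')$ with $\Delta'=1$ if $s=1$ and $\Delta'=\Delta+1$ otherwise, and $q'=\min\{q+b-a\,u(q),\,B\}$. One-step cost: $C(\mathbf x,a)=\Delta+\omega C_r\,a\,(1-u(q))$ (transmitting with empty battery uses paid backup energy at cost $C_r$, weighted by $\omega$). Value iteration: $V_0(\mathbf x)=0$ for all $\mathbf x$; for $k\ge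 0$, $Q_k(\mathbf x,a)=C(\mathbf x,a)+\sum_{\mathbf x'\in\mathcal S}\Pr(\mathbf x'\mid\mathbf x,a)V_k(\mathbf x')$ and $V_{k+1}(\mathbf x)=\min_{a\in\mathcal A}Q_k(\mathbf x,a)$. Value function: $V:\mathcal S\to\mathbb R$ together with a constant $g\in\mathbb R$ satisfies the average-cost Bellman equation $g+V(\mathbf x)=\min_{a\in\mathcal A}\{C(\mathbf x,a)+\sum_{\mathbf x'}\Pr(\mathbf x'\mid\mathbf x,a)V(\mathbf x')\}$ for all $\mathbf x\in\mathcal S$, and $V$ is obtained from value iteration in the sense that $V(\mathbf x)=\lim_{k\to\infty}(V_k(\mathbf x)-c_k)$ pointwise for some real constants $c_k$. Write $Q(\mathbf x,a)=C(\mathbf x,a)+\sum_{\mathbf x'}\Pr(\mathbf x'\mid\mathbf x,a)V(\mathbf x')$. *)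

theory Defs
  imports Complex_Main
begin

text \<open>States are pairs (Delta, q) with Delta >= 1 (Age of Information) and 0 <= q <= B
  (battery level). Functions on states are represented as curried functions
  nat => nat => real; only their values on valid states matter.\<close>

definition valid_state :: "nat \<Rightarrow> nat \<Rightarrow> nat \<Rightarrow> bool" where
  "valid_state B \<Delta> q \<longleftrightarrow> 1 \<le> \<Delta> \<and> q \<le> B"

definition u :: "nat \<Rightarrow> nat" where
  "u x = (if x > 0 then 1 else 0)"

text \<open>Probability of the Bernoulli(lambda) energy arrival b.\<close>
definition prob_b :: "real \<Rightarrow> bool \<Rightarrow> real" where
  "prob_b lam b = (if b then lam else 1 - lam)"

text \<open>Probability of the success indicator s given action a (a = 1: Bernoulli(1-p); a = 0: s = 0).\<close>
definition prob_s :: "real \<Rightarrow> nat \<Rightarrow> bool \<Rightarrow> real" where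
  "prob_s p a s = (if a = 1 then (if s then 1 - p else p) else (if s then 0 else 1))"

definition next_aoi :: "nat \<Rightarrow> bool \<Rightarrow> nat" where
  "next_aoi \<Delta> s = (if s then 1 else \<Delta> + 1)"

definition next_bat :: "nat \<Rightarrow> nat \<Rightarrow> nat \<Rightarrow> bool \<Rightarrow> nat" where
  "next_bat B q a b = min (q + (if b then 1 else 0) - a * u q) B"

definition exp_next :: "real \<Rightarrow> real \<Rightarrow> nat \<Rightarrow> (nat \<Rightarrow> nat \<Rightarrow> real) \<Rightarrow> nat \<Rightarrow> nat \<Rightarrow> nat \<Rightarrow> real" where
  "exp_next p lam B W \<Delta> q a =
     (\<Sum>b\<in>(UNIV::bool set). \<Sum>s\<in>(UNIV::bool set).
        prob_b lam b * prob_s p a s * W (next_aoi \<Delta> s) (next_bat B q a b))"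

definition cost :: "real \<Rightarrow> real \<Rightarrow> nat \<Rightarrow> nat \<Rightarrow> nat \<Rightarrow> real" where
  "cost \<omega> Cr \<Delta> q a = real \<Delta> + \<omega> * Cr * real a * (1 - real (u q))"

definition Qfun :: "real \<Rightarrow> real \<Rightarrow> nat \<Rightarrow> real \<Rightarrow> real \<Rightarrow> (nat \<Rightarrow> nat \<Rightarrow> real) \<Rightarrow> nat \<Rightarrow> nat \<Rightarrow> nat \<Rightarrow> real" where
  "Qfun p lam B \<omega> Cr W \<Delta> q a = cost \<omega> Cr \<Delta> q a + exp_next p lam B W \<Delta> q a"

fun VI :: "real \<Rightarrow> real \<Rightarrow> nat \<Rightarrow> real \<Rightarrow> real \<Rightarrow> nat \<Rightarrow> nat \<Rightarrow> nat \<Rightarrow> real" where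
  "VI p lam B \<omega> Cr 0 \<Delta> q = 0"
| "VI p lam B \<omega> Cr (Suc k) \<Delta> q =
     min (Qfun p lam B \<omega> Cr (VI p lam B \<omega> Cr k) \<Delta> q 0) (Qfun p lam B \<omega> Cr (VI p lam B \<omega> Cr k) \<Delta> q 1)"

definition value_function :: "real \<Rightarrow> real \<Rightarrow> nat \<Rightarrow> real \<Rightarrow> real \<Rightarrow> (nat \<Rightarrow> nat \<Rightarrow> real) \<Rightarrow> bool" where
  "value_function p lam B \<omega> Cr V \<longleftrightarrow>
     (\<exists>g::real. \<forall>\<Delta> q. valid_state B \<Delta> q \<longrightarrow>
         g + V \<Delta> q = min (Qfun p lam B \<omega> Cr V \<Delta> q 0) (Qfun p lam B \<omega> Cr V \<Delta> q 1)) \<and>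
     (\<exists>c::nat \<Rightarrow> real. \<forall>\<Delta> q. valid_state B \<Delta> q \<longrightarrow>
         (\<lambda>k. VI p lam B \<omega> Cr k \<Delta> q - c k) \<longlonglongrightarrow> V \<Delta> q)"

end

theory Submission
  imports Defs
begin

lemma Q0: "Qfun p lam B \<omega> Cr W \<Delta> q 0 = real \<Delta> + lam * W (Suc \<Delta>) (min (Suc q) B) + (1-lam) * W (Suc \<Delta>) (min q B)"
  unfolding Qfun_def exp_next_def cost_def prob_b_def prob_s_def next_aoi_def next_bat_def
  by (simp add: UNIV_bool)

lemma Q1: "Qfun p lam B \<omega> Cr W \<Delta> q 1 = real \<Delta> + \<omega>*Cr*(1 - real(u q))
   + lam*((1-p)*W 1 (min (Suc q - u q) B) + p*W (Suc \<Delta>) (min (Suc q - u q) B))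
   + (1-lam)*((1-p)*W 1 (min (q - u q) B) + p*W (Suc \<Delta>) (min (q - u q) B))"
  unfolding Qfun_def exp_next_def cost_def prob_b_def prob_s_def next_aoi_def next_bat_def
  by (simp add: UNIV_bool algebra_simps)

lemma min_diff_ge: "min a b - min c d \<ge> min (a - c) (b - (d::real))"
  by (auto simp: min_def)
lemma min_diff_le: "min a b - min c d \<le> max (a - c) (b - (d::real))"
  by (auto simp: min_def max_def)


lemma DQ0: "Qfun p lam B \<omega> Cr W (Suc \<Delta>) q 0 - Qfun p lam B \<omega> Cr W \<Delta> q 0 =
  1 + lam * (W (Suc (Suc \<Delta>)) (min (Suc q) B) - W (Suc \<Delta>) (min (Suc q) B))
    + (1-lam) * (W (Suc (Suc \<Delta>)) (min q B) - W (Suc \<Delta>) (min q B))"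
  by (simp add: Q0 algebra_simps)

lemma DQ1: "Qfun p lam B \<omega> Cr W (Suc \<Delta>) q 1 - Qfun p lam B \<omega> Cr W \<Delta> q 1 =
  1 + p * (lam * (W (Suc (Suc \<Delta>)) (min (Suc q - u q) B) - W (Suc \<Delta>) (min (Suc q - u q) B))
    + (1-lam) * (W (Suc (Suc \<Delta>)) (min (q - u q) B) - W (Suc \<Delta>) (min (q - u q) B)))"
  unfolding Q1 by (simp add: algebra_simps)

lemma conv: "(x::real) \<ge> y \<Longrightarrow> x' \<ge> y' \<Longrightarrow> 0 \<le> lam \<Longrightarrow> lam \<le> 1 \<Longrightarrow>
   lam * x + (1-lam) * x' \<ge> lam * y + (1-lam) * y'"
  by (simp add: add_mono mult_left_mono)

lemma step:
  fixes W :: "nat \<Rightarrow> nat \<Rightarrow> real" and \<omega> Cr :: real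
  assumes p0: "0 \<le> p" and p1: "p \<le> 1" and l0: "0 \<le> lam" and l1: "lam \<le> 1"
    and P0: "\<And>\<Delta> q. q \<le> B \<Longrightarrow> W (Suc \<Delta>) q - W \<Delta> q \<ge> 0"
    and P1: "\<And>\<Delta> q. q < B \<Longrightarrow> W (Suc \<Delta>) (Suc q) - W \<Delta> (Suc q) \<ge> p * (W (Suc \<Delta>) q - W \<Delta> q)"
  defines "W' \<equiv> \<lambda>\<Delta> q. min (Qfun p lam B \<omega> Cr W \<Delta> q 0) (Qfun p lam B \<omega> Cr W \<Delta> q 1)"
  shows "W' (Suc \<Delta>) q - W' \<Delta> q \<ge> 1"
    and "q < B \<Longrightarrow> W' (Suc \<Delta>) (Suc q) - W' \<Delta> (Suc q) \<ge> p * (W' (Suc \<Delta>) q - W' \<Delta> q)"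
proof -
  define d where "d = (\<lambda>k. W (Suc (Suc \<Delta>)) k - W (Suc \<Delta>) k)"
  have dn: "k \<le> B \<Longrightarrow> d k \<ge> 0" for k using P0 d_def by auto
  have dc: "k < B \<Longrightarrow> d (Suc k) \<ge> p * d k" for k using P1 d_def by auto
  have e0: "Qfun p lam B \<omega> Cr W (Suc \<Delta>) q 0 - Qfun p lam B \<omega> Cr W \<Delta> q 0
      = 1 + lam * d (min (Suc q) B) + (1-lam) * d (min q B)" for q
    by (simp add: DQ0 d_def)
  have e1: "Qfun p lam B \<omega> Cr W (Suc \<Delta>) q 1 - Qfun p lam B \<omega> Cr W \<Delta> q 1
      = 1 + p * (lam * d (min (Suc q - u q) B) + (1-lam) * d (min (q - u q) B))" for q
    unfolding DQ1 d_def by simp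
  have g0: "1 + lam * d (min (Suc q) B) + (1-lam) * d (min q B) \<ge> 1" for q
    using conv[OF dn[of "min (Suc q) B"] dn[of "min q B"] l0 l1] by simp
  have g1: "1 + p * (lam * d (min (Suc q - u q) B) + (1-lam) * d (min (q - u q) B)) \<ge> 1" for q
    using conv[OF dn[of "min (Suc q - u q) B"] dn[of "min (q - u q) B"] l0 l1] p0
    by (simp add: mult_nonneg_nonneg)
  have m: "W' (Suc \<Delta>) q - W' \<Delta> q \<ge> min (Qfun p lam B \<omega> Cr W (Suc \<Delta>) q 0 - Qfun p lam B \<omega> Cr W \<Delta> q 0)
      (Qfun p lam B \<omega> Cr W (Suc \<Delta>) q 1 - Qfun p lam B \<omega> Cr W \<Delta> q 1)"
    unfolding W'_def by (rule min_diff_ge)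
  have "min (Qfun p lam B \<omega> Cr W (Suc \<Delta>) q 0 - Qfun p lam B \<omega> Cr W \<Delta> q 0)
      (Qfun p lam B \<omega> Cr W (Suc \<Delta>) q 1 - Qfun p lam B \<omega> Cr W \<Delta> q 1) \<ge> 1"
    unfolding e0 e1 using g0[of q] g1[of q] by (simp only: min.bounded_iff)
  then show "W' (Suc \<Delta>) q - W' \<Delta> q \<ge> 1" using m by linarith
  assume qB: "q < B"
  define A1 where "A1 = 1 + lam * d (min (Suc (Suc q)) B) + (1-lam) * d (Suc q)"
  define A2 where "A2 = 1 + p * (lam * d (Suc q) + (1-lam) * d q)"
  define B1 where "B1 = 1 + lam * d (Suc q) + (1-lam) * d q"
  define B2 where "B2 = 1 + p * (lam * d (Suc q - u q) + (1-lam) * d (q - u q))"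
  have uS: "u (Suc q) = 1" by (simp add: u_def)
  have hA1: "Qfun p lam B \<omega> Cr W (Suc \<Delta>) (Suc q) 0 - Qfun p lam B \<omega> Cr W \<Delta> (Suc q) 0 = A1"
    using e0[of "Suc q"] qB A1_def by (simp add: min_def)
  have hA2: "Qfun p lam B \<omega> Cr W (Suc \<Delta>) (Suc q) 1 - Qfun p lam B \<omega> Cr W \<Delta> (Suc q) 1 = A2"
    using e1[of "Suc q"] qB A2_def uS by (simp add: min_def)
  have hB1: "Qfun p lam B \<omega> Cr W (Suc \<Delta>) q 0 - Qfun p lam B \<omega> Cr W \<Delta> q 0 = B1"
    using e0[of "q"] qB B1_def by (simp add: min_def)
  have hB2: "Qfun p lam B \<omega> Cr W (Suc \<Delta>) q 1 - Qfun p lam B \<omega> Cr W \<Delta> q 1 = B2"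
  proof -
    have "min (Suc q - u q) B = Suc q - u q" "min (q - u q) B = q - u q" using qB by (auto simp: u_def)
    then show ?thesis using e1[of "q"] B2_def by simp
  qed
  have dq: "d q \<ge> 0" "d (Suc q) \<ge> 0" using dn qB by auto
  have dqq: "d (Suc q) \<ge> p * d q" using dc qB by auto
  have d2: "d (min (Suc (Suc q)) B) \<ge> p * d (Suc q)"
  proof (cases "Suc q < B")
    case True then show ?thesis using dc[of "Suc q"] by (simp add: min_def)
  next
    case False then have "min (Suc (Suc q)) B = Suc q" using qB by simp
    then show ?thesis using dq p0 p1 by (simp add: mult_left_le_one_le)
  qed
  have dprev: "d (Suc q - u q) \<le> d (Suc q) \<and> d (q - u q) \<le> d q \<or>
      (d (Suc q) \<ge> p * d (Suc q - u q) \<and> d q \<ge> p * d (q - u q))"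
  proof (cases q)
    case 0 then show ?thesis by (simp add: u_def)
  next
    case (Suc m)
    then have "u q = 1" by (simp add: u_def)
    then show ?thesis using Suc dc[of m] dc[of q] qB by auto
  qed
  have dpre0: "d (Suc q - u q) \<ge> 0" "d (q - u q) \<ge> 0" using dn qB by auto
  have pp: "p * p \<le> p" using p0 p1 by (simp add: mult_left_le_one_le)
  have X1: "lam * d (Suc q) + (1-lam) * d q \<ge> p * (lam * d (Suc q - u q) + (1-lam) * d (q - u q))"
  proof -
    have "p * d (Suc q - u q) \<le> d (Suc q) \<and> p * d (q - u q) \<le> d q"
      using dprev proof
      assume h: "d (Suc q - u q) \<le> d (Suc q) \<and> d (q - u q) \<le> d q"
      have "p * d (Suc q - u q) \<le> d (Suc q - u q)" "p * d (q - u q) \<le> d (q - u q)"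
        using dpre0 p0 p1 by (simp_all add: mult_left_le_one_le)
      then show ?thesis using h by linarith
    qed auto
    then show ?thesis using conv[of "p * d (Suc q - u q)" "d (Suc q)" "p * d (q - u q)" "d q" lam] l0 l1
      by (simp add: algebra_simps)
  qed
  have X2: "lam * d (min (Suc (Suc q)) B) + (1-lam) * d (Suc q) \<ge> p * (lam * d (Suc q) + (1-lam) * d q)"
    using conv[OF d2 dqq l0 l1] by (simp add: algebra_simps)
  have X3: "lam * d (Suc q) + (1-lam) * d q \<ge> p * (lam * d (Suc q) + (1-lam) * d q)"
    using conv[OF dq(2) dq(1) l0 l1] p0 p1 by (simp add: mult_left_le_one_le)
  have Xn: "lam * d (Suc q - u q) + (1-lam) * d (q - u q) \<ge> 0"
    using conv[OF dpre0 l0 l1] by simp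
  have Xm: "lam * d (Suc q) + (1-lam) * d q \<ge> 0"
    using conv[OF dq(2) dq(1) l0 l1] by simp
  have c1: "A1 \<ge> p * B1"
  proof -
    have "p * B1 = p + p * (lam * d (Suc q) + (1-lam) * d q)" by (simp add: B1_def algebra_simps)
    then show ?thesis using X2 p1 by (simp add: A1_def)
  qed
  have c2: "A1 \<ge> p * B2"
  proof -
    have "p * B2 = p + p * (p * (lam * d (Suc q - u q) + (1-lam) * d (q - u q)))" by (simp add: B2_def algebra_simps)
    moreover have "p * (p * (lam * d (Suc q - u q) + (1-lam) * d (q - u q))) \<le> p * (lam * d (Suc q) + (1-lam) * d q)"
      using X1 p0 by (simp add: mult_left_mono)
    ultimately show ?thesis using X2 p1 by (simp add: A1_def)
  qed
  have c3: "A2 \<ge> p * B1"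
  proof -
    have "p * B1 = p + p * (lam * d (Suc q) + (1-lam) * d q)" by (simp add: B1_def algebra_simps)
    then show ?thesis using p1 by (simp add: A2_def)
  qed
  have c4: "A2 \<ge> p * B2"
  proof -
    have "p * B2 = p + p * (p * (lam * d (Suc q - u q) + (1-lam) * d (q - u q)))" by (simp add: B2_def algebra_simps)
    moreover have "p * (p * (lam * d (Suc q - u q) + (1-lam) * d (q - u q))) \<le> p * (lam * d (Suc q) + (1-lam) * d q)"
      using X1 p0 by (simp add: mult_left_mono)
    ultimately show ?thesis using p1 by (simp add: A2_def)
  qed
  have L: "W' (Suc \<Delta>) (Suc q) - W' \<Delta> (Suc q) \<ge> min A1 A2"
    using min_diff_ge[of "Qfun p lam B \<omega> Cr W (Suc \<Delta>) (Suc q) 0" "Qfun p lam B \<omega> Cr W (Suc \<Delta>) (Suc q) 1"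
        "Qfun p lam B \<omega> Cr W \<Delta> (Suc q) 0" "Qfun p lam B \<omega> Cr W \<Delta> (Suc q) 1"] hA1 hA2
    unfolding W'_def by simp
  have R: "W' (Suc \<Delta>) q - W' \<Delta> q \<le> max B1 B2"
    using min_diff_le[of "Qfun p lam B \<omega> Cr W (Suc \<Delta>) q 0" "Qfun p lam B \<omega> Cr W (Suc \<Delta>) q 1"
        "Qfun p lam B \<omega> Cr W \<Delta> q 0" "Qfun p lam B \<omega> Cr W \<Delta> q 1"] hB1 hB2
    unfolding W'_def by simp
  have "p * (W' (Suc \<Delta>) q - W' \<Delta> q) \<le> p * max B1 B2" using R p0 by (simp add: mult_left_mono)
  also have "\<dots> \<le> min A1 A2" using c1 c2 c3 c4 by (simp add: max_def min_def)
  finally show "W' (Suc \<Delta>) (Suc q) - W' \<Delta> (Suc q) \<ge> p * (W' (Suc \<Delta>) q - W' \<Delta> q)" using L by linarith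
qed


lemma VI_Suc_fun: "VI p lam B \<omega> Cr (Suc k) = (\<lambda>\<Delta> q. min (Qfun p lam B \<omega> Cr (VI p lam B \<omega> Cr k) \<Delta> q 0)
     (Qfun p lam B \<omega> Cr (VI p lam B \<omega> Cr k) \<Delta> q 1))"
  by (rule ext)+ simp

lemma VI_inv:
  assumes "0 \<le> p" "p \<le> 1" "0 \<le> lam" "lam \<le> 1"
  shows "(\<forall>\<Delta> q. q \<le> B \<longrightarrow> 0 \<le> VI p lam B \<omega> Cr k (Suc \<Delta>) q - VI p lam B \<omega> Cr k \<Delta> q) \<and>
    (\<forall>\<Delta> q. q < B \<longrightarrow> p * (VI p lam B \<omega> Cr k (Suc \<Delta>) q - VI p lam B \<omega> Cr k \<Delta> q)
       \<le> VI p lam B \<omega> Cr k (Suc \<Delta>) (Suc q) - VI p lam B \<omega> Cr k \<Delta> (Suc q))"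
proof (induction k)
  case 0 then show ?case by simp
next
  case (Suc k)
  note s = step[OF assms, where W="VI p lam B \<omega> Cr k" and B=B and \<omega>=\<omega> and Cr=Cr]
  have a: "\<And>\<Delta> q. q \<le> B \<Longrightarrow> 0 \<le> VI p lam B \<omega> Cr k (Suc \<Delta>) q - VI p lam B \<omega> Cr k \<Delta> q"
    using Suc by blast
  have b: "\<And>\<Delta> q. q < B \<Longrightarrow> p * (VI p lam B \<omega> Cr k (Suc \<Delta>) q - VI p lam B \<omega> Cr k \<Delta> q)
       \<le> VI p lam B \<omega> Cr k (Suc \<Delta>) (Suc q) - VI p lam B \<omega> Cr k \<Delta> (Suc q)"
    using Suc by blast
  show ?case unfolding VI_Suc_fun
  proof (intro conjI allI impI)
    fix \<Delta> q :: nat assume "q \<le> B"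
    show "0 \<le> min (Qfun p lam B \<omega> Cr (VI p lam B \<omega> Cr k) (Suc \<Delta>) q 0) (Qfun p lam B \<omega> Cr (VI p lam B \<omega> Cr k) (Suc \<Delta>) q 1) -
          min (Qfun p lam B \<omega> Cr (VI p lam B \<omega> Cr k) \<Delta> q 0) (Qfun p lam B \<omega> Cr (VI p lam B \<omega> Cr k) \<Delta> q 1)"
      using s(1)[OF a b, of \<Delta> q] by linarith
  next
    fix \<Delta> q :: nat assume "q < B"
    then show "p * (min (Qfun p lam B \<omega> Cr (VI p lam B \<omega> Cr k) (Suc \<Delta>) q 0) (Qfun p lam B \<omega> Cr (VI p lam B \<omega> Cr k) (Suc \<Delta>) q 1) -
          min (Qfun p lam B \<omega> Cr (VI p lam B \<omega> Cr k) \<Delta> q 0) (Qfun p lam B \<omega> Cr (VI p lam B \<omega> Cr k) \<Delta> q 1))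
       \<le> min (Qfun p lam B \<omega> Cr (VI p lam B \<omega> Cr k) (Suc \<Delta>) (Suc q) 0) (Qfun p lam B \<omega> Cr (VI p lam B \<omega> Cr k) (Suc \<Delta>) (Suc q) 1) -
          min (Qfun p lam B \<omega> Cr (VI p lam B \<omega> Cr k) \<Delta> (Suc q) 0) (Qfun p lam B \<omega> Cr (VI p lam B \<omega> Cr k) \<Delta> (Suc q) 1)"
      using s(2)[OF a b] by blast
  qed
qed

lemma VI_ge1:
  assumes "0 \<le> p" "p \<le> 1" "0 \<le> lam" "lam \<le> 1"
  shows "1 \<le> VI p lam B \<omega> Cr (Suc k) (Suc \<Delta>) q - VI p lam B \<omega> Cr (Suc k) \<Delta> q"
proof -
  note s = step[OF assms, where W="VI p lam B \<omega> Cr k" and B=B and \<omega>=\<omega> and Cr=Cr]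
  have a: "\<And>\<Delta> q. q \<le> B \<Longrightarrow> 0 \<le> VI p lam B \<omega> Cr k (Suc \<Delta>) q - VI p lam B \<omega> Cr k \<Delta> q"
    using VI_inv[OF assms] by blast
  have b: "\<And>\<Delta> q. q < B \<Longrightarrow> p * (VI p lam B \<omega> Cr k (Suc \<Delta>) q - VI p lam B \<omega> Cr k \<Delta> q)
       \<le> VI p lam B \<omega> Cr k (Suc \<Delta>) (Suc q) - VI p lam B \<omega> Cr k \<Delta> (Suc q)"
    using VI_inv[OF assms] by blast
  show ?thesis unfolding VI_Suc_fun using s(1)[OF a b, of \<Delta> q] by simp
qed

theorem lemma2:
  fixes p lam \<omega> Cr :: real and B :: nat and V :: "nat \<Rightarrow> nat \<Rightarrow> real"
  assumes "0 < p" "p < 1" "0 \<le> lam" "lam \<le> 1" "B > 1" "\<omega> > 0" "Cr \<ge> 0"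
    and "value_function p lam B \<omega> Cr V"
  shows "(\<forall>q \<le> B. \<forall>\<Delta>1 \<Delta>2. 1 \<le> \<Delta>1 \<and> \<Delta>1 \<le> \<Delta>2 \<longrightarrow>
            V \<Delta>2 q - V \<Delta>1 q \<ge> real \<Delta>2 - real \<Delta>1)
       \<and> (\<forall>q < B. \<forall>\<Delta> \<ge> 1.
            V (\<Delta> + 1) (q + 1) - V \<Delta> (q + 1) \<ge> p * (V (\<Delta> + 1) q - V \<Delta> q))"
proof -
  have pr: "0 \<le> p" "p \<le> 1" "0 \<le> lam" "lam \<le> 1" using assms by auto
  obtain c where c: "\<And>\<Delta> q. valid_state B \<Delta> q \<Longrightarrow> (\<lambda>k. VI p lam B \<omega> Cr k \<Delta> q - c k) \<longlonglongrightarrow> V \<Delta> q"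
    using assms(8) unfolding value_function_def by blast
  have dl: "(\<lambda>k. VI p lam B \<omega> Cr k (Suc \<Delta>) q - VI p lam B \<omega> Cr k \<Delta> q) \<longlonglongrightarrow> V (Suc \<Delta>) q - V \<Delta> q"
    if "1 \<le> \<Delta>" "q \<le> B" for \<Delta> q
  proof -
    have "(\<lambda>k. (VI p lam B \<omega> Cr k (Suc \<Delta>) q - c k) - (VI p lam B \<omega> Cr k \<Delta> q - c k)) \<longlonglongrightarrow> V (Suc \<Delta>) q - V \<Delta> q"
      by (intro tendsto_diff c) (use that in \<open>auto simp: valid_state_def\<close>)
    then show ?thesis by simp
  qed
  have one: "V (Suc \<Delta>) q - V \<Delta> q \<ge> 1" if "1 \<le> \<Delta>" "q \<le> B" for \<Delta> q
  proof (rule LIMSEQ_le_const[OF dl[OF that]])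
    show "\<exists>N. \<forall>n\<ge>N. 1 \<le> VI p lam B \<omega> Cr n (Suc \<Delta>) q - VI p lam B \<omega> Cr n \<Delta> q"
    proof (intro exI allI impI)
      fix n :: nat assume "1 \<le> n"
      then obtain k where "n = Suc k" by (cases n) auto
      then show "1 \<le> VI p lam B \<omega> Cr n (Suc \<Delta>) q - VI p lam B \<omega> Cr n \<Delta> q"
        using VI_ge1[OF pr] by simp
    qed
  qed
  show ?thesis
  proof (intro conjI allI impI)
    fix q \<Delta>1 \<Delta>2 :: nat assume q: "q \<le> B" and h: "1 \<le> \<Delta>1 \<and> \<Delta>1 \<le> \<Delta>2"
    from h have "\<Delta>1 \<le> \<Delta>2" by simp
    then show "V \<Delta>2 q - V \<Delta>1 q \<ge> real \<Delta>2 - real \<Delta>1"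
    proof (induction rule: dec_induct)
      case base then show ?case by simp
    next
      case (step n)
      have "V (Suc n) q - V n q \<ge> 1" using one[of n q] step h q by simp
      then show ?case using step by simp
    qed
  next
    fix q \<Delta> :: nat assume q: "q < B" and d: "1 \<le> \<Delta>"
    show "V (\<Delta> + 1) (q + 1) - V \<Delta> (q + 1) \<ge> p * (V (\<Delta> + 1) q - V \<Delta> q)"
    proof -
      have "p * (V (Suc \<Delta>) q - V \<Delta> q) \<le> V (Suc \<Delta>) (Suc q) - V \<Delta> (Suc q)"
      proof (rule LIMSEQ_le[OF tendsto_mult[OF tendsto_const dl[OF d]] dl[OF d]])
        show "q \<le> B" using q by simp
        show "Suc q \<le> B" using q by simp
        show "\<exists>N. \<forall>n\<ge>N. p * (VI p lam B \<omega> Cr n (Suc \<Delta>) q - VI p lam B \<omega> Cr n \<Delta> q)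
              \<le> VI p lam B \<omega> Cr n (Suc \<Delta>) (Suc q) - VI p lam B \<omega> Cr n \<Delta> (Suc q)"
          using VI_inv[OF pr] q by blast
      qed
      then show ?thesis by simp
    qed
  qed
qed

end
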